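(* The eventually different forcing $\mathbb E$ is a union of countably many subsets each of which is centered and closed-uf-lim-linked; i.e., $\mathbb E$ is $\sigma$-$(\Lambda(\mathrm{centered})\cap\Lambda^{\lim}_{\mathrm{cuf}})$-linked.
   Context: $\mathbb E$ consists of triples $(s,k,\varphi)$ with $s\in\omega^{<\omega}$, $k<\omega$ and $\varphi:\omega\to[\omega]^{\leq k}$, ordered by $(s',k',\varphi')\leq(s,k,\varphi)$ iff $s'\supseteq s$, $k'\geq k$, $\varphi'(i)\supseteq\varphi(i)$ for all $i$, and $s'(i)\notin\varphi(i)$ for all $i\in\mathrm{dom}(s')\setminus\mathrm{dom}(s)$. For a poset $\mathbb P$ and $Q\subseteq\mathbb P$, $Q$ is closed-uf-lim-linked if for every non-principal ultrafilter $D$ on $\omega$ there are $\lim^D:Q^\omega\to Q$ and a $\mathbb P$-name $\dot D'$ of an ultrafilter extending $D$ such that for all $\bar q=\langle q_m\rangle\in Q^\omega$, $\lim^D\bar q\Vdash\{m:q_m\in\dot G\}\in\dot D'$. *)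

theory Defs
  imports Main "HOL-Library.Sublist"
begin

type_synonym Econd = "nat list \<times> nat \<times> (nat \<Rightarrow> nat set)"

definition E_carrier :: "Econd set" where
  "E_carrier = {(s, k, \<phi>). \<forall>i. finite (\<phi> i) \<and> card (\<phi> i) \<le> k}"

definition E_le :: "Econd \<Rightarrow> Econd \<Rightarrow> bool" where
  "E_le c' c = (case c' of (s', k', \<phi>') \<Rightarrow> case c of (s, k, \<phi>) \<Rightarrow>
     prefix s s' \<and> k \<le> k' \<and> (\<forall>i. \<phi> i \<subseteq> \<phi>' i) \<and>
     (\<forall>i. length s \<le> i \<and> i < length s' \<longrightarrow> s' ! i \<notin> \<phi> i))"

definition nonprincipal_ultrafilter :: "nat set set \<Rightarrow> bool" where
  "nonprincipal_ultrafilter D \<longleftrightarrow>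
     UNIV \<in> D \<and> {} \<notin> D \<and>
     (\<forall>A B. A \<in> D \<and> A \<subseteq> B \<longrightarrow> B \<in> D) \<and>
     (\<forall>A B. A \<in> D \<and> B \<in> D \<longrightarrow> A \<inter> B \<in> D) \<and>
     (\<forall>A. A \<in> D \<or> - A \<in> D) \<and>
     (\<forall>A. finite A \<longrightarrow> A \<notin> D)"

text \<open>Truth values are regular open sets of conditions: downward closed sets A
  such that any p all of whose extensions have extensions in A lies in A.
  p forces phi iff p belongs to the truth value of phi.\<close>

definition ro_set :: "'a set \<Rightarrow> ('a \<Rightarrow> 'a \<Rightarrow> bool) \<Rightarrow> 'a set \<Rightarrow> bool" where
  "ro_set P le A \<longleftrightarrow> A \<subseteq> P \<and>
     (\<forall>p\<in>A. \<forall>r\<in>P. le r p \<longrightarrow> r \<in> A) \<and>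
     (\<forall>p\<in>P. (\<forall>r\<in>P. le r p \<longrightarrow> (\<exists>s\<in>P. le s r \<and> s \<in> A)) \<longrightarrow> p \<in> A)"

definition ro_neg :: "'a set \<Rightarrow> ('a \<Rightarrow> 'a \<Rightarrow> bool) \<Rightarrow> 'a set \<Rightarrow> 'a set" where
  "ro_neg P le A = {p\<in>P. \<forall>r\<in>P. le r p \<longrightarrow> r \<notin> A}"

definition ro_join :: "'a set \<Rightarrow> ('a \<Rightarrow> 'a \<Rightarrow> bool) \<Rightarrow> 'a set \<Rightarrow> 'a set \<Rightarrow> 'a set" where
  "ro_join P le A B = {p\<in>P. \<forall>r\<in>P. le r p \<longrightarrow> (\<exists>s\<in>P. le s r \<and> (s \<in> A \<or> s \<in> B))}"

text \<open>Truth value of "q belongs to the generic filter".\<close>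
definition ro_of :: "'a set \<Rightarrow> ('a \<Rightarrow> 'a \<Rightarrow> bool) \<Rightarrow> 'a \<Rightarrow> 'a set" where
  "ro_of P le q = {p\<in>P. \<forall>r\<in>P. le r p \<longrightarrow> (\<exists>s\<in>P. le s r \<and> le s q)}"

text \<open>A name of a subset of omega is given by its membership truth values
  X :: nat => 'a set (each regular open).\<close>
definition subset_name :: "'a set \<Rightarrow> ('a \<Rightarrow> 'a \<Rightarrow> bool) \<Rightarrow> (nat \<Rightarrow> 'a set) \<Rightarrow> bool" where
  "subset_name P le X \<longleftrightarrow> (\<forall>m. ro_set P le (X m))"

text \<open>Truth value of "X is a subset of Y".\<close>
definition bv_subset :: "'a set \<Rightarrow> ('a \<Rightarrow> 'a \<Rightarrow> bool) \<Rightarrow> (nat \<Rightarrow> 'a set) \<Rightarrow> (nat \<Rightarrow> 'a set) \<Rightarrow> 'a set" where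
  "bv_subset P le X Y = P \<inter> (\<Inter>m. ro_join P le (ro_neg P le (X m)) (Y m))"

definition check_set :: "'a set \<Rightarrow> nat set \<Rightarrow> nat \<Rightarrow> 'a set" where
  "check_set P A = (\<lambda>m. if m \<in> A then P else {})"

text \<open>U is a P-name of an ultrafilter on omega extending D: U X is the truth
  value of "X belongs to the ultrafilter", and 1 forces the ultrafilter axioms
  and that every element of D belongs to it.\<close>
definition uf_name :: "'a set \<Rightarrow> ('a \<Rightarrow> 'a \<Rightarrow> bool) \<Rightarrow> nat set set \<Rightarrow> ((nat \<Rightarrow> 'a set) \<Rightarrow> 'a set) \<Rightarrow> bool" where
  "uf_name P le D U \<longleftrightarrow>
     (\<forall>X. subset_name P le X \<longrightarrow> ro_set P le (U X)) \<and>
     (\<forall>X Y. subset_name P le X \<and> subset_name P le Y \<longrightarrow> U X \<inter> bv_subset P le X Y \<subseteq> U Y) \<and>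
     (\<forall>X Y. subset_name P le X \<and> subset_name P le Y \<longrightarrow> U X \<inter> U Y \<subseteq> U (\<lambda>m. X m \<inter> Y m)) \<and>
     U (\<lambda>m. {}) = {} \<and>
     (\<forall>X. subset_name P le X \<longrightarrow> ro_join P le (U X) (U (\<lambda>m. ro_neg P le (X m))) = P) \<and>
     (\<forall>A\<in>D. U (check_set P A) = P)"

definition centered :: "'a set \<Rightarrow> ('a \<Rightarrow> 'a \<Rightarrow> bool) \<Rightarrow> 'a set \<Rightarrow> bool" where
  "centered P le Q \<longleftrightarrow> Q \<subseteq> P \<and> (\<forall>F. finite F \<and> F \<subseteq> Q \<longrightarrow> (\<exists>r\<in>P. \<forall>q\<in>F. le r q))"

definition closed_uf_lim_linked :: "'a set \<Rightarrow> ('a \<Rightarrow> 'a \<Rightarrow> bool) \<Rightarrow> 'a set \<Rightarrow> bool" where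
  "closed_uf_lim_linked P le Q \<longleftrightarrow> Q \<subseteq> P \<and>
     (\<forall>D. nonprincipal_ultrafilter D \<longrightarrow>
        (\<exists>lim :: (nat \<Rightarrow> 'a) \<Rightarrow> 'a. \<exists>U. uf_name P le D U \<and>
           (\<forall>q. (\<forall>m. q m \<in> Q) \<longrightarrow>
                lim q \<in> Q \<and> lim q \<in> U (\<lambda>m. ro_of P le (q m)))))"

end

theory Submission
  imports Defs "HOL-Library.Countable"
begin


definition sub :: "'a set \<Rightarrow> ('a \<Rightarrow> 'a \<Rightarrow> bool) \<Rightarrow> 'a \<Rightarrow> (nat \<Rightarrow> 'a set) \<Rightarrow> (nat \<Rightarrow> 'a set) \<Rightarrow> bool" where
  "sub P le p X Y \<longleftrightarrow> (\<forall>m. \<forall>r\<in>P. le r p \<and> r \<in> X m \<longrightarrow> r \<in> Y m)"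

definition bfilt :: "'a set \<Rightarrow> ('a \<Rightarrow> 'a \<Rightarrow> bool) \<Rightarrow> ('a \<times> (nat \<Rightarrow> 'a set)) set \<Rightarrow> bool" where
  "bfilt P le R \<longleftrightarrow> (\<forall>p X. (p,X)\<in>R \<longrightarrow> p\<in>P \<and> subset_name P le X) \<and>
   (\<forall>p X r. (p,X)\<in>R \<and> r\<in>P \<and> le r p \<longrightarrow> (r,X)\<in>R) \<and>
   (\<forall>p X. p\<in>P \<and> subset_name P le X \<and> (\<forall>r\<in>P. le r p \<longrightarrow> (\<exists>s\<in>P. le s r \<and> (s,X)\<in>R)) \<longrightarrow> (p,X)\<in>R) \<and>
   (\<forall>p X Y. (p,X)\<in>R \<and> subset_name P le Y \<and> sub P le p X Y \<longrightarrow> (p,Y)\<in>R) \<and>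
   (\<forall>p X Y. (p,X)\<in>R \<and> (p,Y)\<in>R \<longrightarrow> (p, \<lambda>m. X m \<inter> Y m)\<in>R) \<and>
   (\<forall>p. (p, \<lambda>m. {}) \<notin> R)"

lemma bfiltI:
  assumes "\<And>p X. (p,X)\<in>R \<Longrightarrow> p\<in>P \<and> subset_name P le X"
    "\<And>p X r. (p,X)\<in>R \<and> r\<in>P \<and> le r p \<Longrightarrow> (r,X)\<in>R"
    "\<And>p X. p\<in>P \<and> subset_name P le X \<and> (\<forall>r\<in>P. le r p \<longrightarrow> (\<exists>s\<in>P. le s r \<and> (s,X)\<in>R)) \<Longrightarrow> (p,X)\<in>R"
    "\<And>p X Y. (p,X)\<in>R \<and> subset_name P le Y \<and> sub P le p X Y \<Longrightarrow> (p,Y)\<in>R"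
    "\<And>p X Y. (p,X)\<in>R \<and> (p,Y)\<in>R \<Longrightarrow> (p, \<lambda>m. X m \<inter> Y m)\<in>R"
    "\<And>p. (p, \<lambda>m. {}) \<notin> R"
  shows "bfilt P le R"
  unfolding bfilt_def
  apply (intro conjI)
  subgoal using assms(1) by blast
  subgoal using assms(2) by blast
  subgoal using assms(3) by blast
  subgoal using assms(4) by blast
  subgoal using assms(5) by blast
  subgoal using assms(6) by blast
  done

lemma bfD1: "bfilt P le R \<Longrightarrow> (p,X)\<in>R \<Longrightarrow> p\<in>P" unfolding bfilt_def by blast
lemma bfD1': "bfilt P le R \<Longrightarrow> (p,X)\<in>R \<Longrightarrow> subset_name P le X" unfolding bfilt_def by blast
lemma bfD2: "bfilt P le R \<Longrightarrow> (p,X)\<in>R \<Longrightarrow> r\<in>P \<Longrightarrow> le r p \<Longrightarrow> (r,X)\<in>R" unfolding bfilt_def by blast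
lemma bfD3: "bfilt P le R \<Longrightarrow> p\<in>P \<Longrightarrow> subset_name P le X \<Longrightarrow> (\<forall>r\<in>P. le r p \<longrightarrow> (\<exists>s\<in>P. le s r \<and> (s,X)\<in>R)) \<Longrightarrow> (p,X)\<in>R"
  unfolding bfilt_def by blast
lemma bfD4: "bfilt P le R \<Longrightarrow> (p,X)\<in>R \<Longrightarrow> subset_name P le Y \<Longrightarrow> sub P le p X Y \<Longrightarrow> (p,Y)\<in>R" unfolding bfilt_def by blast
lemma bfD5: "bfilt P le R \<Longrightarrow> (p,X)\<in>R \<Longrightarrow> (p,Y)\<in>R \<Longrightarrow> (p, \<lambda>m. X m \<inter> Y m)\<in>R" unfolding bfilt_def by blast
lemma bfD6: "bfilt P le R \<Longrightarrow> (p, \<lambda>m. {}) \<notin> R" unfolding bfilt_def by blast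

locale preo =
  fixes P :: "'a set" and le :: "'a \<Rightarrow> 'a \<Rightarrow> bool"
  assumes refl: "p \<in> P \<Longrightarrow> le p p"
  and trans: "\<lbrakk>a\<in>P; b\<in>P; c\<in>P; le a b; le b c\<rbrakk> \<Longrightarrow> le a c"
begin

lemma sub_down: assumes "sub P le p X Y" "p \<in> P" "q \<in> P" "le q p" shows "sub P le q X Y"
  unfolding sub_def
proof (intro allI ballI impI)
  fix m r assume "r \<in> P" "le r q \<and> r \<in> X m"
  then have "le r p" using trans assms by blast
  then show "r \<in> Y m" using assms \<open>r \<in> P\<close> \<open>le r q \<and> r \<in> X m\<close> unfolding sub_def by blast
qed

lemma sub_trans: "sub P le p X Y \<Longrightarrow> sub P le p Y Z \<Longrightarrow> sub P le p X Z"
  unfolding sub_def by blast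

lemma ro_Int: assumes A: "ro_set P le A" and B: "ro_set P le B" shows "ro_set P le (A \<inter> B)"
  unfolding ro_set_def
proof (intro conjI ballI impI)
  show "A \<inter> B \<subseteq> P" using A unfolding ro_set_def by blast
  show "\<And>p r. p \<in> A \<inter> B \<Longrightarrow> r \<in> P \<Longrightarrow> le r p \<Longrightarrow> r \<in> A \<inter> B"
    using A B unfolding ro_set_def by blast
  fix p assume p: "p \<in> P" and h: "\<forall>r\<in>P. le r p \<longrightarrow> (\<exists>s\<in>P. le s r \<and> s \<in> A \<inter> B)"
  have "p \<in> A" using A p h unfolding ro_set_def by (meson IntD1)
  moreover have "p \<in> B" using B p h unfolding ro_set_def by (meson IntD2)
  ultimately show "p \<in> A \<inter> B" by blast
qed

lemma name_Int: "subset_name P le X \<Longrightarrow> subset_name P le Y \<Longrightarrow> subset_name P le (\<lambda>m. X m \<inter> Y m)"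
  unfolding subset_name_def using ro_Int by blast

lemma ro_neg_ro: assumes A: "ro_set P le A" shows "ro_set P le (ro_neg P le A)"
  unfolding ro_set_def
proof (intro conjI ballI impI)
  show "ro_neg P le A \<subseteq> P" unfolding ro_neg_def by blast
next
  fix p r assume p: "p \<in> ro_neg P le A" and r: "r \<in> P" "le r p"
  have pP: "p \<in> P" using p unfolding ro_neg_def by blast
  have "\<forall>r'\<in>P. le r' r \<longrightarrow> r' \<notin> A"
  proof (intro ballI impI)
    fix r' assume "r' \<in> P" "le r' r"
    then have "le r' p" using trans r pP by blast
    then show "r' \<notin> A" using p \<open>r' \<in> P\<close> unfolding ro_neg_def by blast
  qed
  then show "r \<in> ro_neg P le A" using r unfolding ro_neg_def by blast
next
  fix p assume p: "p \<in> P" and h: "\<forall>r\<in>P. le r p \<longrightarrow> (\<exists>s\<in>P. le s r \<and> s \<in> ro_neg P le A)"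
  have "\<forall>r\<in>P. le r p \<longrightarrow> r \<notin> A"
  proof (intro ballI impI notI)
    fix r assume r: "r \<in> P" "le r p" "r \<in> A"
    then obtain s where s: "s \<in> P" "le s r" "s \<in> ro_neg P le A" using h by blast
    have "s \<in> A" using A r s unfolding ro_set_def by blast
    moreover have "le s s" using refl s by blast
    ultimately show False using s unfolding ro_neg_def by blast
  qed
  then show "p \<in> ro_neg P le A" using p unfolding ro_neg_def by blast
qed

lemma name_neg: "subset_name P le X \<Longrightarrow> subset_name P le (\<lambda>m. ro_neg P le (X m))"
  unfolding subset_name_def using ro_neg_ro by blast

lemma ro_of_ro: "ro_set P le (ro_of P le q)"
  unfolding ro_set_def
proof (intro conjI ballI impI)
  show "ro_of P le q \<subseteq> P" unfolding ro_of_def by blast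
next
  fix p r assume p: "p \<in> ro_of P le q" and r: "r \<in> P" "le r p"
  have pP: "p \<in> P" using p unfolding ro_of_def by blast
  have "\<forall>r'\<in>P. le r' r \<longrightarrow> (\<exists>s\<in>P. le s r' \<and> le s q)"
  proof (intro ballI impI)
    fix r' assume "r' \<in> P" "le r' r"
    then have "le r' p" using trans r pP by blast
    then show "\<exists>s\<in>P. le s r' \<and> le s q" using p \<open>r' \<in> P\<close> unfolding ro_of_def by blast
  qed
  then show "r \<in> ro_of P le q" using r unfolding ro_of_def by blast
next
  fix p assume p: "p \<in> P" and h: "\<forall>r\<in>P. le r p \<longrightarrow> (\<exists>s\<in>P. le s r \<and> s \<in> ro_of P le q)"
  have "\<forall>r\<in>P. le r p \<longrightarrow> (\<exists>s\<in>P. le s r \<and> le s q)"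
  proof (intro ballI impI)
    fix r assume r: "r \<in> P" "le r p"
    then obtain s where s: "s \<in> P" "le s r" "s \<in> ro_of P le q" using h by blast
    then obtain s' where s': "s' \<in> P" "le s' s" "le s' q" using refl unfolding ro_of_def by blast
    have "le s' r" using trans s s' r by blast
    then show "\<exists>s\<in>P. le s r \<and> le s q" using s' by blast
  qed
  then show "p \<in> ro_of P le q" using p unfolding ro_of_def by blast
qed

lemma bv_sub: "subset_name P le X \<Longrightarrow> subset_name P le Y \<Longrightarrow> p \<in> bv_subset P le X Y \<Longrightarrow> sub P le p X Y"
  unfolding sub_def
proof (intro allI ballI impI)
  fix m r assume nX: "subset_name P le X" and nY: "subset_name P le Y" and p: "p \<in> bv_subset P le X Y"
    and r: "r \<in> P" "le r p \<and> r \<in> X m"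
  have X: "ro_set P le (X m)" and Y: "ro_set P le (Y m)" using nX nY unfolding subset_name_def by auto
  have pP: "p \<in> P" and pj: "p \<in> ro_join P le (ro_neg P le (X m)) (Y m)" using p unfolding bv_subset_def by auto
  have "\<forall>r'\<in>P. le r' r \<longrightarrow> (\<exists>s\<in>P. le s r' \<and> s \<in> Y m)"
  proof (intro ballI impI)
    fix r' assume r': "r' \<in> P" "le r' r"
    then have "le r' p" using trans r pP by blast
    then obtain s where s: "s \<in> P" "le s r'" "s \<in> ro_neg P le (X m) \<or> s \<in> Y m"
      using pj r' unfolding ro_join_def by blast
    have "s \<in> X m" using X r r' s trans unfolding ro_set_def by meson
    then have "s \<notin> ro_neg P le (X m)" using s refl unfolding ro_neg_def by blast
    then show "\<exists>s\<in>P. le s r' \<and> s \<in> Y m" using s by blast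
  qed
  then show "r \<in> Y m" using Y r unfolding ro_set_def by blast
qed

definition ultra :: "('a \<times> (nat \<Rightarrow> 'a set)) set \<Rightarrow> bool" where
  "ultra R \<longleftrightarrow> (\<forall>X. subset_name P le X \<longrightarrow> (\<forall>p\<in>P. \<exists>s\<in>P. le s p \<and> ((s,X)\<in>R \<or> (s, \<lambda>m. ro_neg P le (X m))\<in>R)))"

definition cl :: "('a \<times> (nat \<Rightarrow> 'a set)) set \<Rightarrow> ('a \<times> (nat \<Rightarrow> 'a set)) set" where
  "cl S = {(p,X). p\<in>P \<and> subset_name P le X \<and> (\<forall>r\<in>P. le r p \<longrightarrow> (\<exists>s\<in>P. le s r \<and> (s,X)\<in>S))}"

lemma cl_down: assumes "(p,X) \<in> cl S" "r \<in> P" "le r p" shows "(r,X) \<in> cl S"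
proof -
  have pP: "p \<in> P" "subset_name P le X" using assms(1) unfolding cl_def by auto
  have "\<forall>r'\<in>P. le r' r \<longrightarrow> (\<exists>s\<in>P. le s r' \<and> (s,X)\<in>S)"
  proof (intro ballI impI)
    fix r' assume r': "r' \<in> P" "le r' r"
    then have "le r' p" using trans assms pP by blast
    then show "\<exists>s\<in>P. le s r' \<and> (s,X)\<in>S" using assms(1) r' unfolding cl_def by blast
  qed
  then show ?thesis using assms pP unfolding cl_def by blast
qed

lemma cl_reg: assumes "p \<in> P" "subset_name P le X" "\<forall>r\<in>P. le r p \<longrightarrow> (\<exists>s\<in>P. le s r \<and> (s,X)\<in>cl S)"
  shows "(p,X) \<in> cl S"
proof -
  have "\<forall>r\<in>P. le r p \<longrightarrow> (\<exists>s\<in>P. le s r \<and> (s,X)\<in>S)"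
  proof (intro ballI impI)
    fix r assume r: "r \<in> P" "le r p"
    then obtain s where s: "s \<in> P" "le s r" "(s,X) \<in> cl S" using assms by blast
    then obtain s' where s': "s' \<in> P" "le s' s" "(s',X) \<in> S" using refl unfolding cl_def by blast
    have "le s' r" using trans s s' r by blast
    then show "\<exists>s\<in>P. le s r \<and> (s,X)\<in>S" using s' by blast
  qed
  then show ?thesis using assms unfolding cl_def by blast
qed

lemma clI: "p\<in>P \<Longrightarrow> subset_name P le X \<Longrightarrow> (\<forall>r\<in>P. le r p \<longrightarrow> (\<exists>s\<in>P. le s r \<and> (s,X)\<in>S)) \<Longrightarrow> (p,X) \<in> cl S"
  unfolding cl_def by simp
lemma clE: "(p,X) \<in> cl S \<Longrightarrow> r\<in>P \<Longrightarrow> le r p \<Longrightarrow> (\<exists>s\<in>P. le s r \<and> (s,X)\<in>S)"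
  unfolding cl_def by simp
lemma cl_mem: "(p,X) \<in> cl S \<Longrightarrow> p \<in> P \<and> subset_name P le X" unfolding cl_def by blast

lemma chain_ub:
  assumes C: "C \<in> chains {R. bfilt P le R \<and> R0 \<subseteq> R}" and ne: "C \<noteq> {}"
  shows "\<exists>U\<in>{R. bfilt P le R \<and> R0 \<subseteq> R}. \<forall>X\<in>C. X \<subseteq> U"
proof -
  define R where "R = cl (\<Union>C)"
  have Cb: "\<And>S. S \<in> C \<Longrightarrow> bfilt P le S \<and> R0 \<subseteq> S" using C unfolding chains_def by blast
  have Cc: "\<And>S T. S \<in> C \<Longrightarrow> T \<in> C \<Longrightarrow> S \<subseteq> T \<or> T \<subseteq> S" using C unfolding chains_def chain_subset_def by blast
  have sub1: "S \<subseteq> R" if "S \<in> C" for S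
  proof
    fix x assume x: "x \<in> S"
    obtain p X where xx[simp]: "x = (p,X)" by (cases x)
    have b: "bfilt P le S" using Cb that by blast
    have x: "(p,X) \<in> S" using x by simp
    have "p \<in> P" "subset_name P le X" using bfD1[OF b x] bfD1'[OF b x] by auto
    moreover have "\<forall>r\<in>P. le r p \<longrightarrow> (\<exists>s\<in>P. le s r \<and> (s,X)\<in>\<Union>C)"
    proof (intro ballI impI)
      fix r assume r: "r \<in> P" "le r p"
      then have "(r,X) \<in> S" using bfD2[OF b x] by auto
      then show "\<exists>s\<in>P. le s r \<and> (s,X)\<in>\<Union>C" using r refl that by blast
    qed
    ultimately show "x \<in> R" unfolding R_def using clI by simp
  qed
  have "bfilt P le R"
  proof (rule bfiltI)
    show "\<And>p X. (p, X) \<in> R \<Longrightarrow> p \<in> P \<and> subset_name P le X" unfolding R_def using cl_mem by blast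
    show "\<And>p X r. (p, X) \<in> R \<and> r \<in> P \<and> le r p \<Longrightarrow> (r, X) \<in> R"
      unfolding R_def using cl_down by blast
    show "\<And>p X. p \<in> P \<and> subset_name P le X \<and> (\<forall>r\<in>P. le r p \<longrightarrow> (\<exists>s\<in>P. le s r \<and> (s, X) \<in> R)) \<Longrightarrow> (p, X) \<in> R"
      unfolding R_def using cl_reg by blast
  next
    fix p X Y assume a: "(p, X) \<in> R \<and> subset_name P le Y \<and> sub P le p X Y"
    have "\<forall>r\<in>P. le r p \<longrightarrow> (\<exists>s\<in>P. le s r \<and> (s,Y)\<in>\<Union>C)"
    proof (intro ballI impI)
      fix r assume r: "r \<in> P" "le r p"
      obtain s S where s: "s \<in> P" "le s r" "S \<in> C" "(s,X) \<in> S" using a r clE unfolding R_def by blast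
      have pP: "p \<in> P" using a cl_mem unfolding R_def by blast
      have "le s p" using trans s r pP by blast
      then have "sub P le s X Y" using a sub_down s pP by blast
      moreover have bS: "bfilt P le S" using Cb[OF s(3)] by blast
      ultimately have "(s,Y) \<in> S" using bfD4[OF bS s(4)] a by blast
      then show "\<exists>s\<in>P. le s r \<and> (s,Y)\<in>\<Union>C" using s by blast
    qed
    moreover have "p \<in> P" using a cl_mem unfolding R_def by blast
    ultimately show "(p,Y) \<in> R" unfolding R_def using a clI by blast
  next
    fix p X Y assume a: "(p, X) \<in> R \<and> (p, Y) \<in> R"
    have "\<forall>r\<in>P. le r p \<longrightarrow> (\<exists>s\<in>P. le s r \<and> (s,\<lambda>m. X m \<inter> Y m)\<in>\<Union>C)"
    proof (intro ballI impI)
      fix r assume r: "r \<in> P" "le r p"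
      obtain s S where s: "s \<in> P" "le s r" "S \<in> C" "(s,X) \<in> S" using a r clE unfolding R_def by blast
      have pP: "p \<in> P" using a cl_mem unfolding R_def by blast
      have "le s p" using trans r s pP by blast
      then obtain s' T where s': "s' \<in> P" "le s' s" "T \<in> C" "(s',Y) \<in> T" using a s clE unfolding R_def by blast
      have bS: "bfilt P le S" using Cb[OF s(3)] by blast
      have bT: "bfilt P le T" using Cb[OF s'(3)] by blast
      have sS: "(s',X) \<in> S" using bfD2[OF bS s(4) s'(1,2)] .
      have "(s', \<lambda>m. X m \<inter> Y m) \<in> S \<or> (s', \<lambda>m. X m \<inter> Y m) \<in> T"
      proof (cases "S \<subseteq> T")
        case True then show ?thesis using bfD5[OF bT, of s' X Y] sS s'(4) by blast
      next
        case False then have "T \<subseteq> S" using Cc[OF s(3) s'(3)] by blast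
        then show ?thesis using bfD5[OF bS, of s' X Y] sS s'(4) by blast
      qed
      moreover have "le s' r" using s s' r trans by blast
      ultimately show "\<exists>s\<in>P. le s r \<and> (s,\<lambda>m. X m \<inter> Y m)\<in>\<Union>C" using s s' by blast
    qed
    moreover have "subset_name P le (\<lambda>m. X m \<inter> Y m)" using a name_Int cl_mem unfolding R_def by blast
    moreover have "p \<in> P" using a cl_mem unfolding R_def by blast
    ultimately show "(p, \<lambda>m. X m \<inter> Y m) \<in> R" unfolding R_def using clI by blast
  next
    fix p show "(p, \<lambda>m. {}) \<notin> R"
    proof
      assume "(p, \<lambda>m. {}) \<in> R"
      then have "p \<in> P" using cl_mem unfolding R_def by blast
      then obtain s where "s \<in> P" "(s, \<lambda>m. {}) \<in> \<Union>C" using clE[of p "\<lambda>m. {}" "\<Union>C" p] \<open>(p, \<lambda>m. {}) \<in> R\<close> refl unfolding R_def by blast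
      then obtain S where "S \<in> C" "(s, \<lambda>m. {}) \<in> S" by blast
      then show False using bfD6[of P le S s] Cb[of S] by blast
    qed
  qed
  moreover have "R0 \<subseteq> R" using ne sub1 Cb by blast
  ultimately show ?thesis using sub1 by blast
qed

lemma max_ultra:
  assumes b: "bfilt P le R" and R0: "R0 \<subseteq> R" and full: "\<And>p. p \<in> P \<Longrightarrow> (p, \<lambda>m. P) \<in> R0"
    and mx: "\<forall>S\<in>{R. bfilt P le R \<and> R0 \<subseteq> R}. R \<subseteq> S \<longrightarrow> S = R"
  shows "ultra R"
  unfolding ultra_def
proof (intro allI impI ballI, rule ccontr)
  fix X p assume nX: "subset_name P le X" and pP: "p \<in> P"
    and H: "\<not> (\<exists>s\<in>P. le s p \<and> ((s, X) \<in> R \<or> (s, \<lambda>m. ro_neg P le (X m)) \<in> R))"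
  define Prop where "Prop = (\<lambda>s Y. (s,Y) \<in> R \<or> (le s p \<and> (\<exists>Z. (s,Z)\<in>R \<and> sub P le s (\<lambda>m. Z m \<inter> X m) Y)))"
  define S' where "S' = {(s,Y). Prop s Y}"
  have PropI1: "Prop s Y" if "(s,Y) \<in> R" for s Y using that unfolding Prop_def by blast
  have PropI2: "Prop s Y" if "le s p" "(s,Z) \<in> R" "sub P le s (\<lambda>m. Z m \<inter> X m) Y" for s Y Z
    using that unfolding Prop_def by blast
  have PropE: "thesis" if "Prop s Y" "(s,Y) \<in> R \<Longrightarrow> thesis"
    "\<And>Z. le s p \<Longrightarrow> (s,Z) \<in> R \<Longrightarrow> sub P le s (\<lambda>m. Z m \<inter> X m) Y \<Longrightarrow> thesis" for s Y thesis
    using that unfolding Prop_def by blast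
  define R' where "R' = cl S'"
  note b1 = bfD1[OF b] and b1' = bfD1'[OF b] and b2 = bfD2[OF b] and b4 = bfD4[OF b]
    and b5 = bfD5[OF b] and b6 = bfD6[OF b]
  have Pdown: "Prop s' Y" if h: "Prop s Y" "s \<in> P" "s' \<in> P" "le s' s" for s s' Y
    using h(1) unfolding Prop_def
  proof (elim disjE exE conjE)
    assume "(s,Y) \<in> R" then show "(s', Y) \<in> R \<or> le s' p \<and> (\<exists>Z. (s', Z) \<in> R \<and> sub P le s' (\<lambda>m. Z m \<inter> X m) Y)"
      using b2 h(3,4) by blast
  next
    fix Z assume z: "le s p" "(s,Z) \<in> R" "sub P le s (\<lambda>m. Z m \<inter> X m) Y"
    have "le s' p" using trans[OF h(3) h(2) pP h(4) z(1)] .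
    moreover have "(s',Z) \<in> R" using b2[OF z(2) h(3,4)] .
    moreover have "sub P le s' (\<lambda>m. Z m \<inter> X m) Y" using sub_down[OF z(3) h(2,3,4)] .
    ultimately show "(s', Y) \<in> R \<or> le s' p \<and> (\<exists>Z. (s', Z) \<in> R \<and> sub P le s' (\<lambda>m. Z m \<inter> X m) Y)"
      by blast
  qed
  have R'E: "\<exists>s\<in>P. le s r \<and> Prop s Y" if "(t,Y) \<in> R'" "r \<in> P" "le r t" for t Y r
    using clE[OF that[unfolded R'_def]] unfolding S'_def by blast
  have R'I: "(t,Y) \<in> R'" if "t \<in> P" "subset_name P le Y" "\<forall>r\<in>P. le r t \<longrightarrow> (\<exists>s\<in>P. le s r \<and> Prop s Y)" for t Y
    unfolding R'_def using that by (intro clI) (auto simp: S'_def)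
  have R'M: "t \<in> P \<and> subset_name P le Y" if "(t,Y) \<in> R'" for t Y
    using cl_mem that unfolding R'_def by blast
  have RR': "R \<subseteq> R'"
  proof
    fix x assume x: "x \<in> R"
    obtain t Y where xx: "x = (t,Y)" by (cases x)
    have x': "(t,Y) \<in> R" using x xx by simp
    have "\<forall>r\<in>P. le r t \<longrightarrow> (\<exists>s\<in>P. le s r \<and> Prop s Y)"
    proof (intro ballI impI)
      fix r assume "r \<in> P" "le r t"
      then have "(r,Y) \<in> R" using b2[OF x'] by blast
      then show "\<exists>s\<in>P. le s r \<and> Prop s Y" unfolding Prop_def using refl \<open>r \<in> P\<close> by blast
    qed
    then show "x \<in> R'" using R'I b1[OF x'] b1'[OF x'] xx by blast
  qed
  have "bfilt P le R'"
  proof (rule bfiltI)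
    show "\<And>p X. (p, X) \<in> R' \<Longrightarrow> p \<in> P \<and> subset_name P le X" using R'M by blast
    show "\<And>p X r. (p, X) \<in> R' \<and> r \<in> P \<and> le r p \<Longrightarrow> (r, X) \<in> R'"
      unfolding R'_def using cl_down by blast
    show "\<And>p X. p \<in> P \<and> subset_name P le X \<and> (\<forall>r\<in>P. le r p \<longrightarrow> (\<exists>s\<in>P. le s r \<and> (s, X) \<in> R')) \<Longrightarrow> (p, X) \<in> R'"
      unfolding R'_def using cl_reg by blast
  next
    fix t Y Y' assume a: "(t, Y) \<in> R' \<and> subset_name P le Y' \<and> sub P le t Y Y'"
    have tP: "t \<in> P" using R'M a by blast
    have "\<forall>r\<in>P. le r t \<longrightarrow> (\<exists>s\<in>P. le s r \<and> Prop s Y')"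
    proof (intro ballI impI)
      fix r assume r: "r \<in> P" "le r t"
      obtain s where s: "s \<in> P" "le s r" "Prop s Y" using a r R'E by blast
      have st: "le s t" using trans[OF s(1) r(1) tP s(2) r(2)] .
      have sb: "sub P le s Y Y'" using sub_down[OF _ tP s(1) st] a by blast
      have "Prop s Y'"
        using s(3) unfolding Prop_def
      proof (elim disjE exE conjE)
        assume "(s,Y) \<in> R" then show "(s, Y') \<in> R \<or> le s p \<and> (\<exists>Z. (s, Z) \<in> R \<and> sub P le s (\<lambda>m. Z m \<inter> X m) Y')"
          using b4 sb a by blast
      next
        fix Z assume "le s p" "(s,Z) \<in> R" "sub P le s (\<lambda>m. Z m \<inter> X m) Y"
        then show "(s, Y') \<in> R \<or> le s p \<and> (\<exists>Z. (s, Z) \<in> R \<and> sub P le s (\<lambda>m. Z m \<inter> X m) Y')"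
          using sb sub_trans by blast
      qed
      then show "\<exists>s\<in>P. le s r \<and> Prop s Y'" using s by blast
    qed
    then show "(t,Y') \<in> R'" using R'I tP a by blast
  next
    fix t Y Y' assume a: "(t, Y) \<in> R' \<and> (t, Y') \<in> R'"
    have nY: "subset_name P le Y" "subset_name P le Y'" and tP: "t \<in> P" using R'M a by blast+
    have "\<forall>r\<in>P. le r t \<longrightarrow> (\<exists>s\<in>P. le s r \<and> Prop s (\<lambda>m. Y m \<inter> Y' m))"
    proof (intro ballI impI)
      fix r assume r: "r \<in> P" "le r t"
      obtain s where s: "s \<in> P" "le s r" "Prop s Y" using a r R'E by blast
      have st: "le s t" using trans[OF s(1) r(1) tP s(2) r(2)] .
      then obtain s' where s': "s' \<in> P" "le s' s" "Prop s' Y'" using a s R'E by blast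
      have p1: "Prop s' Y" using Pdown[OF s(3) s(1) s'(1) s'(2)] .
      have "Prop s' (\<lambda>m. Y m \<inter> Y' m)"
        using p1 s'(3)
      proof (elim PropE)
        assume "(s', Y) \<in> R" "(s', Y') \<in> R" then show ?thesis using b5 PropI1 by blast
      next
        fix Z assume h: "(s', Y) \<in> R" "le s' p" "(s',Z) \<in> R" "sub P le s' (\<lambda>m. Z m \<inter> X m) Y'"
        have "(s', \<lambda>m. Y m \<inter> Z m) \<in> R" using b5[OF h(1) h(3)] .
        moreover have "sub P le s' (\<lambda>m. (Y m \<inter> Z m) \<inter> X m) (\<lambda>m. Y m \<inter> Y' m)"
          using h(4) unfolding sub_def by blast
        ultimately show ?thesis using h(2) PropI2 by blast
      next
        fix Z assume h: "(s', Y') \<in> R" "le s' p" "(s',Z) \<in> R" "sub P le s' (\<lambda>m. Z m \<inter> X m) Y"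
        have "(s', \<lambda>m. Y' m \<inter> Z m) \<in> R" using b5[OF h(1) h(3)] .
        moreover have "sub P le s' (\<lambda>m. (Y' m \<inter> Z m) \<inter> X m) (\<lambda>m. Y m \<inter> Y' m)"
          using h(4) unfolding sub_def by blast
        ultimately show ?thesis using h(2) PropI2 by blast
      next
        fix Z Z' assume h: "le s' p" "(s',Z) \<in> R" "sub P le s' (\<lambda>m. Z m \<inter> X m) Y"
           "(s',Z') \<in> R" "sub P le s' (\<lambda>m. Z' m \<inter> X m) Y'"
        have "(s', \<lambda>m. Z m \<inter> Z' m) \<in> R" using b5[OF h(2) h(4)] .
        moreover have "sub P le s' (\<lambda>m. (Z m \<inter> Z' m) \<inter> X m) (\<lambda>m. Y m \<inter> Y' m)"
          using h(3,5) unfolding sub_def by blast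
        ultimately show ?thesis using h(1) PropI2 by blast
      qed
      moreover have "le s' r" using trans[OF s'(1) s(1) r(1) s'(2) s(2)] .
      ultimately show "\<exists>s\<in>P. le s r \<and> Prop s (\<lambda>m. Y m \<inter> Y' m)" using s' by blast
    qed
    moreover have "subset_name P le (\<lambda>m. Y m \<inter> Y' m)" using name_Int nY by blast
    ultimately show "(t, \<lambda>m. Y m \<inter> Y' m) \<in> R'" using R'I tP by blast
  next
    fix t show "(t, \<lambda>m. {}) \<notin> R'"
    proof
      assume a: "(t, \<lambda>m. {}) \<in> R'"
      then have tP: "t \<in> P" using R'M by blast
      obtain s where s: "s \<in> P" "le s t" "Prop s (\<lambda>m. {})" using R'E[OF a tP refl[OF tP]] by blast
      have "(s, \<lambda>m. {}) \<notin> R" using b6 .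
      then obtain Z where Z: "le s p" "(s,Z) \<in> R" "sub P le s (\<lambda>m. Z m \<inter> X m) (\<lambda>m. {})"
        using s(3) unfolding Prop_def by blast
      have nZ: "subset_name P le Z" using b1'[OF Z(2)] .
      have "sub P le s Z (\<lambda>m. ro_neg P le (X m))"
        unfolding sub_def ro_neg_def
      proof (intro allI ballI impI CollectI conjI)
        fix m r r' assume r: "r \<in> P" "le r s \<and> r \<in> Z m" and r': "r' \<in> P" "le r' r"
        have "ro_set P le (Z m)" using nZ unfolding subset_name_def by blast
        then have "r' \<in> Z m" using r r' unfolding ro_set_def by blast
        moreover have "le r' s" using trans[OF r'(1) r(1) s(1) r'(2)] r by blast
        ultimately show "r' \<notin> X m" using Z(3) r' unfolding sub_def by blast
      qed (auto)
      then have "(s, \<lambda>m. ro_neg P le (X m)) \<in> R" using b4[OF Z(2) name_neg[OF nX]] by blast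
      then show False using H s Z by blast
    qed
  qed
  moreover have "R0 \<subseteq> R'" using R0 RR' by blast
  ultimately have "R' = R" using mx RR' by blast
  moreover have "(p,X) \<in> R'"
  proof -
    have "\<forall>r\<in>P. le r p \<longrightarrow> (\<exists>s\<in>P. le s r \<and> Prop s X)"
    proof (intro ballI impI)
      fix r assume r: "r \<in> P" "le r p"
      have "(r, \<lambda>m. P) \<in> R" using full r R0 by blast
      moreover have "sub P le r (\<lambda>m. P \<inter> X m) X" unfolding sub_def by blast
      ultimately have "Prop r X" using r unfolding Prop_def by blast
      then show "\<exists>s\<in>P. le s r \<and> Prop s X" using r refl by blast
    qed
    then show ?thesis using pP nX R'I by blast
  qed
  ultimately show False using H pP refl by blast
qed

lemma exists_ultra:
  assumes b: "bfilt P le R0" and full: "\<And>p. p \<in> P \<Longrightarrow> (p, \<lambda>m. P) \<in> R0"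
  shows "\<exists>R. bfilt P le R \<and> R0 \<subseteq> R \<and> ultra R"
proof -
  have "\<forall>C\<in>chains {R. bfilt P le R \<and> R0 \<subseteq> R}. \<exists>U\<in>{R. bfilt P le R \<and> R0 \<subseteq> R}. \<forall>X\<in>C. X \<subseteq> U"
  proof
    fix C assume C: "C \<in> chains {R. bfilt P le R \<and> R0 \<subseteq> R}"
    show "\<exists>U\<in>{R. bfilt P le R \<and> R0 \<subseteq> R}. \<forall>X\<in>C. X \<subseteq> U"
    proof (cases "C = {}")
      case True then show ?thesis using b by blast
    next
      case False then show ?thesis using chain_ub C by blast
    qed
  qed
  from Zorn_Lemma2[OF this] obtain M where M: "M \<in> {R. bfilt P le R \<and> R0 \<subseteq> R}"
    and mx: "\<forall>X\<in>{R. bfilt P le R \<and> R0 \<subseteq> R}. M \<subseteq> X \<longrightarrow> X = M" by blast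
  then show ?thesis using max_ultra full by blast
qed

lemma uf_from_bfilt:
  assumes b: "bfilt P le R" and u: "ultra R"
    and chk: "\<And>A p. A \<in> D \<Longrightarrow> p \<in> P \<Longrightarrow> (p, check_set P A) \<in> R"
  shows "uf_name P le D (\<lambda>X. {p. (p,X) \<in> R})"
proof -
  have bR: "(\<forall>p X. (p,X)\<in>R \<longrightarrow> p\<in>P \<and> subset_name P le X)"
   "(\<forall>p X r. (p,X)\<in>R \<and> r\<in>P \<and> le r p \<longrightarrow> (r,X)\<in>R)"
   "(\<forall>p X. p\<in>P \<and> subset_name P le X \<and> (\<forall>r\<in>P. le r p \<longrightarrow> (\<exists>s\<in>P. le s r \<and> (s,X)\<in>R)) \<longrightarrow> (p,X)\<in>R)"
   "(\<forall>p X Y. (p,X)\<in>R \<and> subset_name P le Y \<and> sub P le p X Y \<longrightarrow> (p,Y)\<in>R)"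
   "(\<forall>p X Y. (p,X)\<in>R \<and> (p,Y)\<in>R \<longrightarrow> (p, \<lambda>m. X m \<inter> Y m)\<in>R)"
   "(\<forall>p. (p, \<lambda>m. {}) \<notin> R)" using bfD1[OF b] bfD1'[OF b] bfD2[OF b] bfD3[OF b] bfD4[OF b] bfD5[OF b] bfD6[OF b] by blast+
  show ?thesis
  unfolding uf_name_def
proof (intro conjI allI impI ballI)
  fix X assume nX: "subset_name P le X"
  show "ro_set P le {p. (p, X) \<in> R}" unfolding ro_set_def using bR(1,2,3) nX by blast
  show "ro_join P le {p. (p, X) \<in> R} {p. (p, \<lambda>m. ro_neg P le (X m)) \<in> R} = P"
    unfolding ro_join_def using u nX unfolding ultra_def by blast
next
  fix X Y assume n: "subset_name P le X \<and> subset_name P le Y"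
  show "{p. (p, X) \<in> R} \<inter> bv_subset P le X Y \<subseteq> {p. (p, Y) \<in> R}"
    using bv_sub n bR(4) by blast
  show "{p. (p, X) \<in> R} \<inter> {p. (p, Y) \<in> R} \<subseteq> {p. (p, \<lambda>m. X m \<inter> Y m) \<in> R}"
    using bR(5) by blast
next
  show "{p. (p, \<lambda>m. {}) \<in> R} = {}" using bR(6) by blast
next
  fix A assume "A \<in> D" then show "{p. (p, check_set P A) \<in> R} = P" using chk bR(1) by blast
qed
qed

end


lemma E_le_simp: "E_le (s',k',\<phi>') (s,k,\<phi>) \<longleftrightarrow> prefix s s' \<and> k \<le> k' \<and> (\<forall>i. \<phi> i \<subseteq> \<phi>' i) \<and>
     (\<forall>i. length s \<le> i \<and> i < length s' \<longrightarrow> s' ! i \<notin> \<phi> i)"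
  unfolding E_le_def by simp

lemma prefix_nth: "prefix s t \<Longrightarrow> i < length s \<Longrightarrow> t ! i = s ! i"
  unfolding prefix_def by (auto simp: nth_append)

lemma E_refl: "E_le c c"
  by (cases c) (auto simp: E_le_simp)

lemma E_trans: assumes ab: "E_le a b" and bc: "E_le b c" shows "E_le a c"
proof -
  obtain s1 k1 f1 where a: "a = (s1,k1,f1)" by (cases a)
  obtain s2 k2 f2 where b: "b = (s2,k2,f2)" by (cases b)
  obtain s3 k3 f3 where c: "c = (s3,k3,f3)" by (cases c)
  have 1: "prefix s2 s1" "k2 \<le> k1" "\<forall>i. f2 i \<subseteq> f1 i" "\<forall>i. length s2 \<le> i \<and> i < length s1 \<longrightarrow> s1 ! i \<notin> f2 i"
    using ab a b by (auto simp: E_le_simp)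
  have 2: "prefix s3 s2" "k3 \<le> k2" "\<forall>i. f3 i \<subseteq> f2 i" "\<forall>i. length s3 \<le> i \<and> i < length s2 \<longrightarrow> s2 ! i \<notin> f3 i"
    using bc b c by (auto simp: E_le_simp)
  have "\<forall>i. length s3 \<le> i \<and> i < length s1 \<longrightarrow> s1 ! i \<notin> f3 i"
  proof (intro allI impI)
    fix i assume i: "length s3 \<le> i \<and> i < length s1"
    show "s1 ! i \<notin> f3 i"
    proof (cases "i < length s2")
      case True
      then have "s1 ! i = s2 ! i" using prefix_nth 1(1) by blast
      then show ?thesis using 2(4) i True by auto
    next
      case False
      then have "length s2 \<le> i" by simp
      then have "s1 ! i \<notin> f2 i" using 1(4) i by blast
      then show ?thesis using 2(3) by blast
    qed
  qed
  moreover have "prefix s3 s1" using 1(1) 2(1) by (metis prefix_order.trans)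
  moreover have "\<forall>i. f3 i \<subseteq> f1 i" using 1(3) 2(3) by blast
  moreover have "k3 \<le> k1" using 1(2) 2(2) by simp
  ultimately show ?thesis using a c by (simp add: E_le_simp)
qed

interpretation E: preo E_carrier E_le
  by unfold_locales (auto intro: E_refl E_trans)

lemma uf_ne: "nonprincipal_ultrafilter D \<Longrightarrow> A \<in> D \<Longrightarrow> A \<noteq> {}"
  unfolding nonprincipal_ultrafilter_def by blast

lemma uf_compl: "nonprincipal_ultrafilter D \<Longrightarrow> A \<notin> D \<Longrightarrow> -A \<in> D"
  unfolding nonprincipal_ultrafilter_def by blast

lemma uf_Int: "nonprincipal_ultrafilter D \<Longrightarrow> A \<in> D \<Longrightarrow> B \<in> D \<Longrightarrow> A \<inter> B \<in> D"
  unfolding nonprincipal_ultrafilter_def by blast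

lemma uf_UNIV: "nonprincipal_ultrafilter D \<Longrightarrow> UNIV \<in> D"
  unfolding nonprincipal_ultrafilter_def by blast

lemma uf_inter: assumes D: "nonprincipal_ultrafilter D" and I: "finite I" and S: "\<forall>i\<in>I. S i \<in> D"
  shows "(\<Inter>i\<in>I. S i) \<in> D"
  using I S
proof (induction I rule: finite_induct)
  case empty then show ?case using uf_UNIV[OF D] by simp
next
  case (insert x F)
  then have "S x \<in> D" "(\<Inter>i\<in>F. S i) \<in> D" by auto
  then have "S x \<inter> (\<Inter>i\<in>F. S i) \<in> D" using uf_Int[OF D] by blast
  then show ?case by simp
qed

definition EQ :: "nat list \<Rightarrow> nat \<Rightarrow> Econd set" where
  "EQ s k = {c\<in>E_carrier. fst c = s \<and> fst (snd c) = k}"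

definition Elim :: "nat set set \<Rightarrow> nat list \<Rightarrow> nat \<Rightarrow> (nat \<Rightarrow> Econd) \<Rightarrow> Econd" where
  "Elim D s k q = (s, k, \<lambda>i. {x. {m. x \<in> snd (snd (q m)) i} \<in> D})"

lemma EQ_E: "c \<in> EQ s k \<Longrightarrow> \<exists>\<phi>. c = (s,k,\<phi>) \<and> (\<forall>i. finite (\<phi> i) \<and> card (\<phi> i) \<le> k)"
  unfolding EQ_def E_carrier_def by auto

lemma lim_in: assumes D: "nonprincipal_ultrafilter D" and q: "\<forall>m. q m \<in> EQ s k"
  shows "Elim D s k q \<in> EQ s k"
proof -
  define \<psi> where "\<psi> = (\<lambda>i. {x. {m. x \<in> snd (snd (q m)) i} \<in> D})"
  have fin: "card S \<le> k" if S: "finite S" "S \<subseteq> \<psi> i" for S i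
  proof -
    have "\<forall>x\<in>S. {m. x \<in> snd (snd (q m)) i} \<in> D" using S(2) unfolding \<psi>_def by blast
    then have "(\<Inter>x\<in>S. {m. x \<in> snd (snd (q m)) i}) \<in> D"
      using uf_inter[OF D S(1), of "\<lambda>x. {m. x \<in> snd (snd (q m)) i}"] by blast
    then have "(\<Inter>x\<in>S. {m. x \<in> snd (snd (q m)) i}) \<noteq> {}" using uf_ne[OF D] by blast
    then obtain m where m: "m \<in> (\<Inter>x\<in>S. {m. x \<in> snd (snd (q m)) i})" by blast
    then have Sm: "S \<subseteq> snd (snd (q m)) i" by blast
    obtain \<phi> where \<phi>: "q m = (s,k,\<phi>)" "\<forall>i. finite (\<phi> i) \<and> card (\<phi> i) \<le> k" using EQ_E q by blast
    have "S \<subseteq> \<phi> i" using Sm \<phi>(1) by simp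
    moreover have "finite (\<phi> i)" "card (\<phi> i) \<le> k" using \<phi>(2) by auto
    ultimately show "card S \<le> k" using card_mono[of "\<phi> i" S] by linarith
  qed
  have fc: "finite (\<psi> i) \<and> card (\<psi> i) \<le> k" for i
  proof (cases "finite (\<psi> i)")
    case True then show ?thesis using fin[of "\<psi> i" i] by blast
  next
    case False
    then obtain S where "S \<subseteq> \<psi> i" "finite S" "card S = Suc k" using infinite_arbitrarily_large by blast
    then show ?thesis using fin[of S i] by simp
  qed
  have "Elim D s k q = (s,k,\<psi>)" unfolding Elim_def \<psi>_def by simp
  moreover have "(s,k,\<psi>) \<in> E_carrier" unfolding E_carrier_def using fc by simp
  ultimately show ?thesis unfolding EQ_def by simp
qed

lemma core:
  assumes D: "nonprincipal_ultrafilter D" and tC: "t \<in> E_carrier" and A: "A \<in> D" and F: "finite F"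
    and FQ: "\<forall>q\<in>F. \<forall>m. q m \<in> EQ s k" and tle: "\<forall>q\<in>F. E_le t (Elim D s k q)"
  shows "\<exists>m\<in>A. \<exists>r\<in>E_carrier. E_le r t \<and> (\<forall>q\<in>F. E_le r (q m))"
proof -
  obtain st kt ft where t: "t = (st,kt,ft)" by (cases t)
  have ftf: "finite (ft i)" "card (ft i) \<le> kt" for i using tC t unfolding E_carrier_def by auto
  have tl: "prefix s st \<and> k \<le> kt \<and> (\<forall>i. length s \<le> i \<and> i < length st \<longrightarrow> {m. st ! i \<in> snd (snd (q m)) i} \<notin> D)"
    if "q \<in> F" for q
    using tle that unfolding t Elim_def E_le_simp by auto
  define I where "I = F \<times> {length s..<length st}"
  define SS where "SS = (\<lambda>(q::nat \<Rightarrow> Econd, i). {m. st ! i \<notin> snd (snd (q m)) i})"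
  have Ifin: "finite I" unfolding I_def using F by simp
  have "\<forall>x\<in>I. SS x \<in> D"
  proof
    fix x assume x: "x \<in> I"
    obtain q i where xx: "x = (q,i)" by (cases x)
    have "q \<in> F" "length s \<le> i" "i < length st" using x xx unfolding I_def by auto
    then have "{m. st ! i \<in> snd (snd (q m)) i} \<notin> D" using tl by blast
    then have "- {m. st ! i \<in> snd (snd (q m)) i} \<in> D" using uf_compl[OF D] by blast
    moreover have "- {m. st ! i \<in> snd (snd (q m)) i} = SS x" unfolding SS_def xx by auto
    ultimately show "SS x \<in> D" by simp
  qed
  then have "(\<Inter>x\<in>I. SS x) \<in> D" by (rule uf_inter[OF D Ifin])
  then have "A \<inter> (\<Inter>x\<in>I. SS x) \<in> D" using uf_Int[OF D A] by blast
  then have "A \<inter> (\<Inter>x\<in>I. SS x) \<noteq> {}" using uf_ne[OF D] by blast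
  then obtain m where mA: "m \<in> A" and mS: "\<forall>x\<in>I. m \<in> SS x" by blast
  have mq: "st ! i \<notin> snd (snd (q m)) i" if "q \<in> F" "length s \<le> i" "i < length st" for q i
  proof -
    have "(q,i) \<in> I" unfolding I_def using that by simp
    then have "m \<in> SS (q,i)" using mS by blast
    then show ?thesis by (simp add: SS_def)
  qed
  have qmf: "finite (snd (snd (q m)) i) \<and> card (snd (snd (q m)) i) \<le> k" if "q \<in> F" for q i
  proof -
    have "q m \<in> EQ s k" using FQ that by blast
    then obtain \<phi> where "q m = (s,k,\<phi>)" "\<forall>i. finite (\<phi> i) \<and> card (\<phi> i) \<le> k" using EQ_E[of "q m" s k] by blast
    then show ?thesis by simp
  qed
  define fr where "fr = (\<lambda>i. ft i \<union> (\<Union>q\<in>F. snd (snd (q m)) i))"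
  define r where "r = (st, kt + card F * k, fr)"
  have "finite (fr i) \<and> card (fr i) \<le> kt + card F * k" for i
  proof -
    have fU: "finite (\<Union>q\<in>F. snd (snd (q m)) i)" by (rule finite_UN_I[OF F]) (use qmf in blast)
    have "card (\<Union>q\<in>F. snd (snd (q m)) i) \<le> (\<Sum>q\<in>F. card (snd (snd (q m)) i))"
      using card_UN_le[OF F] by blast
    also have "\<dots> \<le> card F * k" using sum_bounded_above[of F "\<lambda>q. card (snd (snd (q m)) i)" k] qmf by simp
    finally have "card (\<Union>q\<in>F. snd (snd (q m)) i) \<le> card F * k" .
    moreover have "card (fr i) \<le> card (ft i) + card (\<Union>q\<in>F. snd (snd (q m)) i)"
      unfolding fr_def by (rule card_Un_le)
    ultimately show ?thesis using ftf[of i] fU unfolding fr_def by simp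
  qed
  then have rC: "r \<in> E_carrier" unfolding r_def E_carrier_def by simp
  have rt: "E_le r t" unfolding r_def t E_le_simp fr_def by auto
  have "E_le r (q m)" if qF: "q \<in> F" for q
  proof -
    have "q m \<in> EQ s k" using FQ qF by blast
    then obtain \<phi> where qm: "q m = (s,k,\<phi>)" using EQ_E[of "q m" s k] by blast
    have "prefix s st" "k \<le> kt" using tl qF by auto
    moreover have "\<forall>i. \<phi> i \<subseteq> fr i" unfolding fr_def using qF qm by force
    moreover have "\<forall>i. length s \<le> i \<and> i < length st \<longrightarrow> st ! i \<notin> \<phi> i" using mq qF qm by force
    ultimately show ?thesis unfolding r_def qm E_le_simp by simp
  qed
  then show ?thesis using mA rC rt by blast
qed

definition gen :: "nat set \<Rightarrow> (nat \<Rightarrow> Econd) set \<Rightarrow> nat \<Rightarrow> Econd set" where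
  "gen A F = (\<lambda>m. if m \<in> A then E_carrier \<inter> (\<Inter>q\<in>F. ro_of E_carrier E_le (q m)) else {})"

definition G0 :: "nat set set \<Rightarrow> nat list \<Rightarrow> nat \<Rightarrow> Econd \<Rightarrow> (nat \<Rightarrow> Econd set) \<Rightarrow> bool" where
  "G0 D s k t Y \<longleftrightarrow> (\<exists>A\<in>D. \<exists>F. finite F \<and> (\<forall>q\<in>F. \<forall>m. q m \<in> EQ s k) \<and>
      (\<forall>q\<in>F. E_le t (Elim D s k q)) \<and> sub E_carrier E_le t (gen A F) Y)"

lemma G0_down: assumes "G0 D s k t Y" "t \<in> E_carrier" "t' \<in> E_carrier" "E_le t' t" shows "G0 D s k t' Y"
proof -
  obtain A F where AF: "A \<in> D" "finite F" "\<forall>q\<in>F. \<forall>m. q m \<in> EQ s k"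
      "\<forall>q\<in>F. E_le t (Elim D s k q)" "sub E_carrier E_le t (gen A F) Y"
    using assms(1) unfolding G0_def by blast
  have "\<forall>q\<in>F. E_le t' (Elim D s k q)" using AF(4) E_trans assms(4) by blast
  moreover have "sub E_carrier E_le t' (gen A F) Y" using E.sub_down[OF AF(5) assms(2,3,4)] .
  ultimately show ?thesis unfolding G0_def using AF by blast
qed

lemma G0_sub: assumes "G0 D s k t Y" "sub E_carrier E_le t Y Y'" shows "G0 D s k t Y'"
proof -
  obtain A F where AF: "A \<in> D" "finite F" "\<forall>q\<in>F. \<forall>m. q m \<in> EQ s k"
      "\<forall>q\<in>F. E_le t (Elim D s k q)" "sub E_carrier E_le t (gen A F) Y"
    using assms(1) unfolding G0_def by blast
  have "sub E_carrier E_le t (gen A F) Y'" using E.sub_trans[OF AF(5) assms(2)] .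
  then show ?thesis unfolding G0_def using AF by blast
qed

lemma G0_int: assumes D: "nonprincipal_ultrafilter D" and "G0 D s k t Y" "G0 D s k t Y'"
  shows "G0 D s k t (\<lambda>m. Y m \<inter> Y' m)"
proof -
  obtain A F where AF: "A \<in> D" "finite F" "\<forall>q\<in>F. \<forall>m. q m \<in> EQ s k"
      "\<forall>q\<in>F. E_le t (Elim D s k q)" "sub E_carrier E_le t (gen A F) Y"
    using assms(2) unfolding G0_def by blast
  obtain A' F' where AF': "A' \<in> D" "finite F'" "\<forall>q\<in>F'. \<forall>m. q m \<in> EQ s k"
      "\<forall>q\<in>F'. E_le t (Elim D s k q)" "sub E_carrier E_le t (gen A' F') Y'"
    using assms(3) unfolding G0_def by blast
  have "A \<inter> A' \<in> D" using uf_Int[OF D AF(1) AF'(1)] .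
  moreover have "finite (F \<union> F')" using AF(2) AF'(2) by simp
  moreover have "\<forall>q\<in>F \<union> F'. \<forall>m. q m \<in> EQ s k" using AF(3) AF'(3) by blast
  moreover have "\<forall>q\<in>F \<union> F'. E_le t (Elim D s k q)" using AF(4) AF'(4) by blast
  moreover have "sub E_carrier E_le t (gen (A \<inter> A') (F \<union> F')) (\<lambda>m. Y m \<inter> Y' m)"
  proof -
    have "gen (A \<inter> A') (F \<union> F') m \<subseteq> gen A F m" "gen (A \<inter> A') (F \<union> F') m \<subseteq> gen A' F' m" for m
      unfolding gen_def by auto
    then show ?thesis using AF(5) AF'(5) unfolding sub_def by blast
  qed
  ultimately show ?thesis unfolding G0_def by blast
qed

lemma G0_empty: assumes D: "nonprincipal_ultrafilter D" and t: "t \<in> E_carrier" shows "\<not> G0 D s k t (\<lambda>m. {})"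
proof
  assume "G0 D s k t (\<lambda>m. {})"
  then obtain A F where AF: "A \<in> D" "finite F" "\<forall>q\<in>F. \<forall>m. q m \<in> EQ s k"
      "\<forall>q\<in>F. E_le t (Elim D s k q)" "sub E_carrier E_le t (gen A F) (\<lambda>m. {})"
    unfolding G0_def by blast
  obtain m r where m: "m \<in> A" "r \<in> E_carrier" "E_le r t" "\<forall>q\<in>F. E_le r (q m)"
    using core[OF D t AF(1) AF(2) AF(3) AF(4)] by blast
  have "r \<in> ro_of E_carrier E_le (q m)" if "q \<in> F" for q
    unfolding ro_of_def using m(2) m(4) that E_trans E_refl by blast
  then have "r \<in> gen A F m" unfolding gen_def using m(1,2) by simp
  then show False using AF(5) m(2,3) unfolding sub_def by blast
qed

definition R0 :: "nat set set \<Rightarrow> nat list \<Rightarrow> nat \<Rightarrow> (Econd \<times> (nat \<Rightarrow> Econd set)) set" where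
  "R0 D s k = E.cl {(t,Y). G0 D s k t Y}"

lemma R0_bfilt: assumes D: "nonprincipal_ultrafilter D" shows "bfilt E_carrier E_le (R0 D s k)"
proof (rule bfiltI)
  show "\<And>p X. (p, X) \<in> R0 D s k \<Longrightarrow> p \<in> E_carrier \<and> subset_name E_carrier E_le X"
    unfolding R0_def using E.cl_mem by blast
  show "\<And>p X r. (p, X) \<in> R0 D s k \<and> r \<in> E_carrier \<and> E_le r p \<Longrightarrow> (r, X) \<in> R0 D s k"
    unfolding R0_def using E.cl_down by blast
  show "\<And>p X. p \<in> E_carrier \<and> subset_name E_carrier E_le X \<and> (\<forall>r\<in>E_carrier. E_le r p \<longrightarrow> (\<exists>t\<in>E_carrier. E_le t r \<and> (t, X) \<in> R0 D s k)) \<Longrightarrow> (p, X) \<in> R0 D s k"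
    unfolding R0_def using E.cl_reg by blast
next
  fix p X Y assume a: "(p, X) \<in> R0 D s k \<and> subset_name E_carrier E_le Y \<and> sub E_carrier E_le p X Y"
  have pP: "p \<in> E_carrier" using a E.cl_mem unfolding R0_def by blast
  have "\<forall>r\<in>E_carrier. E_le r p \<longrightarrow> (\<exists>t\<in>E_carrier. E_le t r \<and> (t,Y) \<in> {(t,Y). G0 D s k t Y})"
  proof (intro ballI impI)
    fix r assume r: "r \<in> E_carrier" "E_le r p"
    obtain t where t: "t \<in> E_carrier" "E_le t r" "(t,X) \<in> {(t,Y). G0 D s k t Y}"
      using E.clE[of p X _ r] a r unfolding R0_def by blast
    have "E_le t p" using E_trans t(2) r(2) by blast
    then have "sub E_carrier E_le t X Y" using E.sub_down[OF _ pP t(1)] a by blast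
    then have "G0 D s k t Y" using G0_sub t(3) by blast
    then show "\<exists>t\<in>E_carrier. E_le t r \<and> (t,Y) \<in> {(t,Y). G0 D s k t Y}" using t by blast
  qed
  then show "(p,Y) \<in> R0 D s k" unfolding R0_def using E.clI pP a by blast
next
  fix p X Y assume a: "(p, X) \<in> R0 D s k \<and> (p, Y) \<in> R0 D s k"
  have pP: "p \<in> E_carrier" and nX: "subset_name E_carrier E_le X" and nY: "subset_name E_carrier E_le Y"
    using a E.cl_mem unfolding R0_def by blast+
  have "\<forall>r\<in>E_carrier. E_le r p \<longrightarrow> (\<exists>t\<in>E_carrier. E_le t r \<and> (t,\<lambda>m. X m \<inter> Y m) \<in> {(t,Y). G0 D s k t Y})"
  proof (intro ballI impI)
    fix r assume r: "r \<in> E_carrier" "E_le r p"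
    obtain t where t: "t \<in> E_carrier" "E_le t r" "G0 D s k t X"
      using E.clE[of p X _ r] a r unfolding R0_def by blast
    have "E_le t p" using E_trans t(2) r(2) by blast
    then obtain t' where t': "t' \<in> E_carrier" "E_le t' t" "G0 D s k t' Y"
      using E.clE[of p Y _ t] a t(1) unfolding R0_def by blast
    have "G0 D s k t' X" using G0_down[OF t(3) t(1) t'(1) t'(2)] .
    then have "G0 D s k t' (\<lambda>m. X m \<inter> Y m)" using G0_int[OF D _ t'(3)] by blast
    moreover have "E_le t' r" using E_trans t(2) t'(2) by blast
    ultimately show "\<exists>t\<in>E_carrier. E_le t r \<and> (t,\<lambda>m. X m \<inter> Y m) \<in> {(t,Y). G0 D s k t Y}" using t' by blast
  qed
  then show "(p, \<lambda>m. X m \<inter> Y m) \<in> R0 D s k" unfolding R0_def using E.clI pP E.name_Int[OF nX nY] by blast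
next
  fix p show "(p, \<lambda>m. {}) \<notin> R0 D s k"
  proof
    assume a: "(p, \<lambda>m. {}) \<in> R0 D s k"
    then have pP: "p \<in> E_carrier" using E.cl_mem unfolding R0_def by blast
    obtain t where "t \<in> E_carrier" "G0 D s k t (\<lambda>m. {})"
      using E.clE[of p "\<lambda>m. {}" _ p] a pP E_refl unfolding R0_def by blast
    then show False using G0_empty[OF D] by blast
  qed
qed

lemma EQ_centered: "centered E_carrier E_le (EQ s k)"
  unfolding centered_def
proof (intro conjI allI impI)
  show "EQ s k \<subseteq> E_carrier" unfolding EQ_def by blast
next
  fix F assume F: "finite F \<and> F \<subseteq> EQ s k"
  define f where "f = (\<lambda>i. \<Union>c\<in>F. snd (snd c) i)"
  define r where "r = (s, k * (card F + 1), f)"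
  have cf: "finite (snd (snd c) i) \<and> card (snd (snd c) i) \<le> k" if cF: "c \<in> F" for c i
  proof -
    have "c \<in> EQ s k" using F cF by blast
    then obtain \<phi> where "c = (s,k,\<phi>)" "\<forall>i. finite (\<phi> i) \<and> card (\<phi> i) \<le> k" using EQ_E[of c s k] by blast
    then show ?thesis by simp
  qed
  have "finite (f i) \<and> card (f i) \<le> k * (card F + 1)" for i
  proof -
    have fin: "finite (f i)" unfolding f_def using F cf by blast
    have "card (f i) \<le> (\<Sum>c\<in>F. card (snd (snd c) i))" unfolding f_def using card_UN_le F by blast
    also have "\<dots> \<le> card F * k" using sum_bounded_above[of F "\<lambda>c. card (snd (snd c) i)" k] cf by simp
    also have "\<dots> \<le> k * (card F + 1)" by simp
    finally show ?thesis using fin by simp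
  qed
  then have rC: "r \<in> E_carrier" unfolding r_def E_carrier_def by simp
  have "E_le r c" if cF: "c \<in> F" for c
  proof -
    have "c \<in> EQ s k" using F cF by blast
    then obtain \<phi> where c: "c = (s,k,\<phi>)" using EQ_E[of c s k] by blast
    have "\<forall>i. \<phi> i \<subseteq> f i" unfolding f_def using cF c by force
    then show ?thesis unfolding r_def c E_le_simp by auto
  qed
  then show "\<exists>r\<in>E_carrier. \<forall>q\<in>F. E_le r q" using rC by blast
qed

lemma check_name: "subset_name E_carrier E_le (check_set E_carrier A)"
  unfolding subset_name_def check_set_def ro_set_def
  apply auto
  using E_refl by blast

lemma EQ_lim_linked: "closed_uf_lim_linked E_carrier E_le (EQ s k)"
  unfolding closed_uf_lim_linked_def
proof (intro conjI allI impI)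
  show "EQ s k \<subseteq> E_carrier" unfolding EQ_def by blast
next
  fix D assume D: "nonprincipal_ultrafilter D"
  have G0_check: "G0 D s k r (check_set E_carrier A)" if "A \<in> D" "r \<in> E_carrier" for A r
  proof -
    have "sub E_carrier E_le r (gen A {}) (check_set E_carrier A)"
      unfolding sub_def gen_def check_set_def by auto
    then show ?thesis unfolding G0_def using that by blast
  qed
  have chk0: "(p, check_set E_carrier A) \<in> R0 D s k" if "A \<in> D" "p \<in> E_carrier" for A p
  proof -
    have "\<forall>r\<in>E_carrier. E_le r p \<longrightarrow> (\<exists>t\<in>E_carrier. E_le t r \<and> (t, check_set E_carrier A) \<in> {(t,Y). G0 D s k t Y})"
      using G0_check[OF that(1)] E_refl by blast
    then show ?thesis unfolding R0_def using that(2) check_name by (intro E.clI) auto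
  qed
  have full: "(p, \<lambda>m. E_carrier) \<in> R0 D s k" if "p \<in> E_carrier" for p
  proof -
    have "check_set E_carrier UNIV = (\<lambda>m. E_carrier)" unfolding check_set_def by simp
    then show ?thesis using chk0[OF uf_UNIV[OF D] that] by simp
  qed
  obtain R where R: "bfilt E_carrier E_le R" "R0 D s k \<subseteq> R" "E.ultra R"
    using E.exists_ultra[OF R0_bfilt[OF D] full] by blast
  have uf: "uf_name E_carrier E_le D (\<lambda>X. {p. (p,X) \<in> R})"
    using E.uf_from_bfilt[OF R(1) R(3)] chk0 R(2) by blast
  have "Elim D s k q \<in> EQ s k \<and> Elim D s k q \<in> {p. (p, \<lambda>m. ro_of E_carrier E_le (q m)) \<in> R}"
    if q: "\<forall>m. q m \<in> EQ s k" for q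
  proof -
    have L: "Elim D s k q \<in> EQ s k" using lim_in[OF D q] .
    then have LP: "Elim D s k q \<in> E_carrier" unfolding EQ_def by blast
    have nm: "subset_name E_carrier E_le (\<lambda>m. ro_of E_carrier E_le (q m))"
      unfolding subset_name_def using E.ro_of_ro by blast
    have G: "G0 D s k r (\<lambda>m. ro_of E_carrier E_le (q m))" if "r \<in> E_carrier" "E_le r (Elim D s k q)" for r
    proof -
      have "sub E_carrier E_le r (gen UNIV {q}) (\<lambda>m. ro_of E_carrier E_le (q m))"
        unfolding sub_def gen_def by auto
      then show ?thesis unfolding G0_def using uf_UNIV[OF D] q that by (intro bexI[of _ UNIV] exI[of _ "{q}"]) auto
    qed
    have "\<forall>r\<in>E_carrier. E_le r (Elim D s k q) \<longrightarrow> (\<exists>t\<in>E_carrier. E_le t r \<and> (t, \<lambda>m. ro_of E_carrier E_le (q m)) \<in> {(t,Y). G0 D s k t Y})"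
      using G E_refl by blast
    then have "(Elim D s k q, \<lambda>m. ro_of E_carrier E_le (q m)) \<in> R0 D s k"
      unfolding R0_def using LP nm by (intro E.clI) auto
    then show ?thesis using L R(2) by blast
  qed
  then show "\<exists>lim U. uf_name E_carrier E_le D U \<and>
             (\<forall>q. (\<forall>m. q m \<in> EQ s k) \<longrightarrow> lim q \<in> EQ s k \<and> lim q \<in> U (\<lambda>m. ro_of E_carrier E_le (q m)))"
    using uf by blast
qed

theorem corollary3p29:
  shows "\<exists>Q :: nat \<Rightarrow> Econd set. (\<Union>n. Q n) = E_carrier \<and>
           (\<forall>n. centered E_carrier E_le (Q n) \<and> closed_uf_lim_linked E_carrier E_le (Q n))"
proof -
  define Q where "Q = (\<lambda>n. EQ (fst (from_nat n :: nat list \<times> nat)) (snd (from_nat n :: nat list \<times> nat)))"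
  have "(\<Union>n. Q n) = E_carrier"
  proof
    show "(\<Union>n. Q n) \<subseteq> E_carrier" unfolding Q_def EQ_def by blast
    show "E_carrier \<subseteq> (\<Union>n. Q n)"
    proof
      fix c assume c: "c \<in> E_carrier"
      obtain s k \<phi> where cc: "c = (s,k,\<phi>)" by (cases c)
      have "c \<in> Q (to_nat (s,k))" unfolding Q_def EQ_def using c cc by simp
      then show "c \<in> (\<Union>n. Q n)" by blast
    qed
  qed
  moreover have "\<forall>n. centered E_carrier E_le (Q n) \<and> closed_uf_lim_linked E_carrier E_le (Q n)"
    unfolding Q_def using EQ_centered EQ_lim_linked by blast
  ultimately show ?thesis by blast
qed

end
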